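(* Let $q$ be a prime power and let $\mathcal W(5,q)$ be the symplectic polar space of ${\rm PG}(5,q)$ defined by the alternating form with Gram matrix $\begin{pmatrix} 0_3 & I_3\\ -I_3 & 0_3\end{pmatrix}$, with $\Pi_1=\langle U_4,U_5,U_6\rangle$ and $\Pi_2=\langle U_1,U_2,U_3\rangle$. Let $\mathcal P_0$ be the set of points $R$ of $\mathcal W(5,q)\setminus(\Pi_1\cup\Pi_2)$ such that the unique line through $R$ meeting both $\Pi_1$ and $\Pi_2$ is a line of $\mathcal W(5,q)$. If $\ell$ is a line of $\mathcal W(5,q)$ disjoint from $\Pi_1\cup\Pi_2$, then $|\ell\cap\mathcal P_0|\in\{1,q+1\}$ if $q$ is even, and $|\ell\cap\mathcal P_0|\in\{0,1,2\}$ if $q$ is odd.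
   Context: $U_i$ is the point with $1$ in position $i$ and $0$ elsewhere. All points of ${\rm PG}(5,q)$ are points of $\mathcal W(5,q)$; a line of $\mathcal W(5,q)$ is a totally isotropic line. *)

theory Defs
  imports Main
begin

text \<open>Vectors of the 6-dimensional space over a field: functions nat => 'a
  supported on coordinates 0..5 (coordinate i here is coordinate i+1 of the paper).\<close>

definition isvec :: "(nat \<Rightarrow> 'a::field) \<Rightarrow> bool" where
  "isvec v \<longleftrightarrow> (\<forall>i\<ge>6. v i = 0)"

definition lc :: "'a::field \<Rightarrow> (nat \<Rightarrow> 'a) \<Rightarrow> 'a \<Rightarrow> (nat \<Rightarrow> 'a) \<Rightarrow> (nat \<Rightarrow> 'a)" where
  "lc a u b w = (\<lambda>i. a * u i + b * w i)"

definition pt :: "(nat \<Rightarrow> 'a::field) \<Rightarrow> (nat \<Rightarrow> 'a) set" where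
  "pt v = {(\<lambda>i. c * v i) | c. c \<noteq> 0}"

definition PG5_points :: "(nat \<Rightarrow> 'a::field) set set" where
  "PG5_points = {pt v | v. isvec v \<and> v \<noteq> (\<lambda>_. 0)}"

definition indep :: "(nat \<Rightarrow> 'a::field) \<Rightarrow> (nat \<Rightarrow> 'a) \<Rightarrow> bool" where
  "indep u w \<longleftrightarrow> (\<forall>a b. lc a u b w = (\<lambda>_. 0) \<longrightarrow> a = 0 \<and> b = 0)"

definition pgline :: "(nat \<Rightarrow> 'a::field) \<Rightarrow> (nat \<Rightarrow> 'a) \<Rightarrow> (nat \<Rightarrow> 'a) set set" where
  "pgline u w = {pt (lc a u b w) | a b. (a, b) \<noteq> (0, 0)}"

definition PG5_line :: "(nat \<Rightarrow> 'a::field) set set \<Rightarrow> bool" where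
  "PG5_line l \<longleftrightarrow> (\<exists>u w. isvec u \<and> isvec w \<and> indep u w \<and> l = pgline u w)"

text \<open>Alternating form with Gram matrix [[0,I],[-I,0]].\<close>
definition sform :: "(nat \<Rightarrow> 'a::field) \<Rightarrow> (nat \<Rightarrow> 'a) \<Rightarrow> 'a" where
  "sform u v = (\<Sum>i<3. u i * v (i + 3) - u (i + 3) * v i)"

definition W_line :: "(nat \<Rightarrow> 'a::field) set set \<Rightarrow> bool" where
  "W_line l \<longleftrightarrow> (\<exists>u w. isvec u \<and> isvec w \<and> indep u w \<and> sform u w = 0 \<and> l = pgline u w)"

definition Pi1 :: "(nat \<Rightarrow> 'a::field) set set" where
  "Pi1 = {pt v | v. isvec v \<and> v \<noteq> (\<lambda>_. 0) \<and> (\<forall>i<3. v i = 0)}"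

definition Pi2 :: "(nat \<Rightarrow> 'a::field) set set" where
  "Pi2 = {pt v | v. isvec v \<and> v \<noteq> (\<lambda>_. 0) \<and> (\<forall>i\<ge>3. v i = 0)}"

definition P0 :: "(nat \<Rightarrow> 'a::field) set set" where
  "P0 = {R. R \<in> PG5_points \<and> R \<notin> Pi1 \<union> Pi2 \<and>
            W_line (THE l. PG5_line l \<and> R \<in> l \<and> l \<inter> Pi1 \<noteq> {} \<and> l \<inter> Pi2 \<noteq> {})}"

end

theory Submission
  imports Defs
begin


lemma three_zeros:
  fixes A D C s1 t1 s2 t2 s3 t3 :: "'a::field"
  assumes e1: "A*s1^2 + D*s1*t1 + C*t1^2 = 0"
    and e2: "A*s2^2 + D*s2*t2 + C*t2^2 = 0"
    and e3: "A*s3^2 + D*s3*t3 + C*t3^2 = 0"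
    and n12: "s1*t2 \<noteq> s2*t1" and n13: "s1*t3 \<noteq> s3*t1" and n23: "s2*t3 \<noteq> s3*t2"
  shows "A = 0 \<and> D = 0 \<and> C = 0"
proof -
  define det where "det = (s1*t2 - s2*t1)*(s1*t3 - s3*t1)*(s2*t3 - s3*t2)"
  have dnz: "det \<noteq> 0" using n12 n13 n23 unfolding det_def by auto
  have "A * det = 0" unfolding det_def using e1 e2 e3 by algebra
  moreover have "C * det = 0" unfolding det_def using e1 e2 e3 by algebra
  moreover have "D * det = 0" unfolding det_def using e1 e2 e3 by algebra
  ultimately show ?thesis using dnz by auto
qed



lemma cross_nz:
  fixes a0 a1 a2 c0 c1 c2 :: "'a::field"
  assumes ac: "\<And>s t. s*a0+t*c0=0 \<Longrightarrow> s*a1+t*c1=0 \<Longrightarrow> s*a2+t*c2=0 \<Longrightarrow> s=0 \<and> t=0"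
  shows "a1*c2 - a2*c1 \<noteq> 0 \<or> a2*c0 - a0*c2 \<noteq> 0 \<or> a0*c1 - a1*c0 \<noteq> 0"
proof (rule ccontr)
  assume h: "\<not> ?thesis"
  have "a0 \<noteq> 0 \<or> a1 \<noteq> 0 \<or> a2 \<noteq> 0" using ac[of 1 0] by auto
  moreover have "a0 = 0" using ac[of "-c0" a0] h by (auto simp: algebra_simps)
  moreover have "a1 = 0" using ac[of "-c1" a1] h by (auto simp: algebra_simps)
  moreover have "a2 = 0" using ac[of "-c2" a2] h by (auto simp: algebra_simps)
  ultimately show False by auto
qed

lemma par_dep:
  fixes b0 b1 b2 d0 d1 d2 n0 n1 n2 :: "'a::field"
  assumes bd: "\<And>s t. s*b0+t*d0=0 \<Longrightarrow> s*b1+t*d1=0 \<Longrightarrow> s*b2+t*d2=0 \<Longrightarrow> s=0 \<and> t=0"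
    and nz: "n0 \<noteq> 0 \<or> n1 \<noteq> 0 \<or> n2 \<noteq> 0"
    and b: "b1*n2 = b2*n1" "b2*n0 = b0*n2" "b0*n1 = b1*n0"
    and d: "d1*n2 = d2*n1" "d2*n0 = d0*n2" "d0*n1 = d1*n0"
  shows False
proof -
  have b0: "b0 \<noteq> 0 \<or> b1 \<noteq> 0 \<or> b2 \<noteq> 0" using bd[of 1 0] by auto
  have gen: False if nj: "nj \<noteq> 0" and bj: "bk * nj = bj * nk" "bm * nj = bj * nm" and
     dj: "dk * nj = dj * nk" "dm * nj = dj * nm"
     and bd': "\<And>s t. s*bj+t*dj=0 \<Longrightarrow> s*bk+t*dk=0 \<Longrightarrow> s*bm+t*dm=0 \<Longrightarrow> s=0 \<and> t=0"
     and bnz: "bj \<noteq> 0 \<or> bk \<noteq> 0 \<or> bm \<noteq> 0"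
     for nj nk nm bj bk bm dj dk dm :: 'a
  proof -
    have "(dj*bk - bj*dk) * nj = 0" using bj dj by algebra
    hence 1: "dj*bk + (-bj)*dk = 0" using nj by simp
    have "(dj*bm - bj*dm) * nj = 0" using bj dj by algebra
    hence 2: "dj*bm + (-bj)*dm = 0" using nj by simp
    have "dj*bj + (-bj)*dj = 0" by simp
    then have "dj = 0 \<and> bj = 0" using bd'[of dj "-bj"] 1 2 by auto
    then have "bk = 0" "bm = 0" using bj nj by auto
    then show False using bnz \<open>dj = 0 \<and> bj = 0\<close> by auto
  qed
  show False
  proof (cases "n0 \<noteq> 0")
    case True
    show False using True by - (rule gen[where nj=n0 and nk=n1 and nm=n2 and bj=b0 and bk=b1 and bm=b2 and dj=d0 and dk=d1 and dm=d2], (assumption | (insert b(3)[symmetric] b(2) d(3)[symmetric] d(2) bd b0, blast))+)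
  next
    case f0: False
    show False
    proof (cases "n1 \<noteq> 0")
      case True
      show False using True by - (rule gen[where nj=n1 and nk=n2 and nm=n0 and bj=b1 and bk=b2 and bm=b0 and dj=d1 and dk=d2 and dm=d0], (assumption | (insert b(1)[symmetric] b(3) d(1)[symmetric] d(3) bd b0, blast))+)
    next
      case False
      then have "n2 \<noteq> 0" using nz f0 by auto
      show False using \<open>n2 \<noteq> 0\<close> by - (rule gen[where nj=n2 and nk=n0 and nm=n1 and bj=b2 and bk=b0 and bm=b1 and dj=d2 and dk=d0 and dm=d1], (assumption | (insert b(2)[symmetric] b(1) d(2)[symmetric] d(1) bd b0, blast))+)
    qed
  qed
qed

lemma key_odd:
  fixes a0 a1 a2 c0 c1 c2 b0 b1 b2 d0 d1 d2 :: "'a::field"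
  assumes ac: "\<And>s t. s*a0+t*c0=0 \<Longrightarrow> s*a1+t*c1=0 \<Longrightarrow> s*a2+t*c2=0 \<Longrightarrow> s=0 \<and> t=0"
    and bd: "\<And>s t. s*b0+t*d0=0 \<Longrightarrow> s*b1+t*d1=0 \<Longrightarrow> s*b2+t*d2=0 \<Longrightarrow> s=0 \<and> t=0"
    and o1: "a0*b0+a1*b1+a2*b2 = 0" and o2: "a0*d0+a1*d1+a2*d2 = 0"
    and o3: "c0*b0+c1*b1+c2*b2 = 0" and o4: "c0*d0+c1*d1+c2*d2 = 0"
  shows False
proof -
  define n0 where "n0 = a1*c2 - a2*c1"
  define n1 where "n1 = a2*c0 - a0*c2"
  define n2 where "n2 = a0*c1 - a1*c0"
  have nz: "n0 \<noteq> 0 \<or> n1 \<noteq> 0 \<or> n2 \<noteq> 0" using cross_nz[OF ac] unfolding n0_def n1_def n2_def by blast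
  have b: "b1*n2 = b2*n1" "b2*n0 = b0*n2" "b0*n1 = b1*n0"
    using o1 o3 unfolding n0_def n1_def n2_def by algebra+
  have d: "d1*n2 = d2*n1" "d2*n0 = d0*n2" "d0*n1 = d1*n0"
    using o2 o4 unfolding n0_def n1_def n2_def by algebra+
  show False by (rule par_dep[OF bd nz b d])
qed



lemma invol_even:
  assumes "finite A" "\<forall>x\<in>A. f x \<in> A \<and> f x \<noteq> x \<and> f (f x) = x"
  shows "even (card A)"
  using assms
proof (induction "card A" arbitrary: A rule: less_induct)
  case less
  show ?case
  proof (cases "A = {}")
    case True then show ?thesis by simp
  next
    case False
    then obtain x where x: "x \<in> A" by auto
    define A' where "A' = A - {x, f x}"
    have fx: "f x \<in> A" "f x \<noteq> x" using less.prems x by auto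
    have cA: "card A = card A' + 2"
    proof -
      have "card A' = card A - card {x, f x}" unfolding A'_def
        using less.prems(1) x fx by (subst card_Diff_subset) auto
      moreover have "card {x, f x} = 2" using fx by auto
      moreover have "card {x, f x} \<le> card A" using less.prems(1) x fx by (intro card_mono) auto
      ultimately show ?thesis by simp
    qed
    have "even (card A')"
    proof (rule less.hyps)
      show "card A' < card A" using cA by simp
      show "finite A'" using less.prems(1) unfolding A'_def by simp
      show "\<forall>y\<in>A'. f y \<in> A' \<and> f y \<noteq> y \<and> f (f y) = y"
      proof
        fix y assume y: "y \<in> A'"
        then have yA: "y \<in> A" "y \<noteq> x" "y \<noteq> f x" unfolding A'_def by auto
        have "f y \<noteq> x" using yA less.prems(2) by metis
        moreover have "f y \<noteq> f x" using yA less.prems(2) x by metis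
        ultimately show "f y \<in> A' \<and> f y \<noteq> y \<and> f (f y) = y"
          using yA less.prems(2) unfolding A'_def by auto
      qed
    qed
    then show ?thesis using cA by simp
  qed
qed

lemma char2_even:
  assumes "(1::'a::{field,finite}) + 1 = 0"
  shows "even (card (UNIV::'a set))"
proof (rule invol_even[where f="\<lambda>x. x + 1"])
  show "finite (UNIV::'a set)" by simp
  show "\<forall>x\<in>(UNIV::'a set). x + 1 \<in> UNIV \<and> x + 1 \<noteq> x \<and> x + 1 + 1 = x"
    using assms by (simp add: add.assoc)
qed

lemma even_char2:
  assumes "even (card (UNIV::'a::{field,finite} set))"
  shows "(1::'a) + 1 = 0"
proof (rule ccontr)
  assume h: "(1::'a) + 1 \<noteq> 0"
  have "even (card (UNIV - {0::'a}))"
  proof (rule invol_even[where f="\<lambda>x. - x"])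
    show "finite (UNIV - {0::'a})" by simp
    show "\<forall>x\<in>UNIV - {0::'a}. - x \<in> UNIV - {0} \<and> - x \<noteq> x \<and> - (- x) = x"
    proof
      fix x :: 'a assume "x \<in> UNIV - {0}"
      then have x: "x \<noteq> 0" by simp
      have "- x \<noteq> x"
      proof
        assume "- x = x"
        then have "(1 + 1) * x = 0" by (simp add: algebra_simps)
        then show False using h x by simp
      qed
      then show "- x \<in> UNIV - {0} \<and> - x \<noteq> x \<and> - (- x) = x" using x by simp
    qed
  qed
  moreover have "card (UNIV::'a set) = card (UNIV - {0::'a}) + 1"
  proof -
    have "card (UNIV - {0::'a}) = card (UNIV::'a set) - 1" by (rule card_Diff_singleton) auto
    moreover have "card (UNIV::'a set) > 0" by (rule finite_UNIV_card_ge_0) simp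
    ultimately show ?thesis by linarith
  qed
  ultimately show False using assms by presburger
qed



lemma pt_self: "v \<in> pt v"
  unfolding pt_def by (rule CollectI, rule exI[of _ 1]) simp

lemma pt_scale: "(k::'a::field) \<noteq> 0 \<Longrightarrow> pt (\<lambda>i. k * v i) = pt v"
proof -
  assume k: "k \<noteq> 0"
  show ?thesis unfolding pt_def
  proof (intro set_eqI iffI)
    fix x assume "x \<in> {\<lambda>i. c * (k * v i) |c. c \<noteq> 0}"
    then obtain c where "c \<noteq> 0" "x = (\<lambda>i. c * (k * v i))" by auto
    then show "x \<in> {\<lambda>i. c * v i |c. c \<noteq> 0}" using k
      by (intro CollectI exI[of _ "c*k"]) (auto simp: mult.assoc)
  next
    fix x assume "x \<in> {\<lambda>i. c * v i |c. c \<noteq> 0}"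
    then obtain c where "c \<noteq> 0" "x = (\<lambda>i. c * v i)" by auto
    then show "x \<in> {\<lambda>i. c * (k * v i) |c. c \<noteq> 0}" using k
      by (intro CollectI exI[of _ "c/k"]) auto
  qed
qed

lemma pt_memD: "x \<in> pt v \<Longrightarrow> \<exists>c. (c::'a::field) \<noteq> 0 \<and> x = (\<lambda>i. c * v i)"
  unfolding pt_def by auto

lemma pt_eqD: "pt v = pt w \<Longrightarrow> \<exists>c. (c::'a::field) \<noteq> 0 \<and> v = (\<lambda>i. c * w i)"
  using pt_self[of v] pt_memD by metis

lemma pgline_memD:
  assumes "pt p \<in> pgline u w"
  shows "\<exists>a b. (a, b) \<noteq> (0::'a::field, 0) \<and> p = lc a u b w"
proof -
  obtain a b where ab: "(a, b) \<noteq> (0, 0)" "pt p = pt (lc a u b w)"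
    using assms unfolding pgline_def by auto
  obtain c where c: "c \<noteq> 0" "p = (\<lambda>i. c * lc a u b w i)" using pt_eqD[OF ab(2)] by auto
  show ?thesis
    by (rule exI[of _ "c*a"], rule exI[of _ "c*b"]) (use ab c in \<open>auto simp: lc_def algebra_simps\<close>)
qed

lemma pgline_eq:
  assumes ind: "indep p q" and hp: "pt p \<in> pgline u w" and hq: "pt q \<in> pgline u w"
  shows "pgline u w = pgline p (q::nat \<Rightarrow> 'a::field)"
proof -
  obtain a b where ab: "p = lc a u b w" using pgline_memD[OF hp] by auto
  obtain c d where cd: "q = lc c u d w" using pgline_memD[OF hq] by auto
  define det where "det = a*d - b*c"
  have detnz: "det \<noteq> 0"
  proof
    assume det0: "det = 0"
    have "lc d p (-b) q = (\<lambda>_. 0)" using det0 unfolding ab cd lc_def det_def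
      by (auto simp: algebra_simps)
    then have bd: "d = 0 \<and> b = 0" using ind unfolding indep_def by fastforce
    have "lc c p (-a) q = (\<lambda>_. 0)" using bd unfolding ab cd lc_def
      by (auto simp: algebra_simps)
    then have "c = 0 \<and> a = 0" using ind unfolding indep_def by fastforce
    then have "lc 1 p 0 q = (\<lambda>_. 0)" using bd unfolding ab cd lc_def by auto
    then show False using ind unfolding indep_def by fastforce
  qed
  show ?thesis
  proof (intro set_eqI iffI)
    fix X assume "X \<in> pgline u w"
    then obtain g h where gh: "(g, h) \<noteq> (0, 0)" "X = pt (lc g u h w)" unfolding pgline_def by auto
    define al where "al = (g*d - h*c)/det"
    define be where "be = (h*a - g*b)/det"
    have e1: "al*a + be*c = g"
    proof -
      have "al*a + be*c = ((g*d - h*c)*a + (h*a - g*b)*c)/det"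
        unfolding al_def be_def by (simp add: add_divide_distrib)
      also have "(g*d - h*c)*a + (h*a - g*b)*c = g*det" unfolding det_def by algebra
      finally show ?thesis using detnz by simp
    qed
    have e2: "al*b + be*d = h"
    proof -
      have "al*b + be*d = ((g*d - h*c)*b + (h*a - g*b)*d)/det"
        unfolding al_def be_def by (simp add: add_divide_distrib)
      also have "(g*d - h*c)*b + (h*a - g*b)*d = h*det" unfolding det_def by algebra
      finally show ?thesis using detnz by simp
    qed
    have eq: "lc al p be q = lc g u h w"
    proof
      fix i
      have "lc al p be q i = (al*a + be*c) * u i + (al*b + be*d) * w i"
        unfolding ab cd lc_def by (simp add: algebra_simps)
      then show "lc al p be q i = lc g u h w i" using e1 e2 unfolding lc_def by simp
    qed
    have "(al, be) \<noteq> (0, 0)"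
    proof
      assume "(al, be) = (0, 0)"
      then have "g*d - h*c = 0" "h*a - g*b = 0" unfolding al_def be_def using detnz by auto
      then have "g * det = 0" "h * det = 0" unfolding det_def by algebra+
      then show False using gh detnz by auto
    qed
    moreover have "X = pt (lc al p be q)" using gh eq by simp
    ultimately show "X \<in> pgline p q" unfolding pgline_def by blast
  next
    fix X assume "X \<in> pgline p q"
    then obtain g h where gh: "(g, h) \<noteq> (0, 0)" "X = pt (lc g p h q)" unfolding pgline_def by auto
    have eq: "lc g p h q = lc (g*a + h*c) u (g*b + h*d) w"
      unfolding ab cd lc_def by (auto simp: algebra_simps)
    have "(g*a + h*c, g*b + h*d) \<noteq> (0, 0)"
    proof
      assume "(g*a + h*c, g*b + h*d) = (0, 0)"
      then have "lc g p h q = lc 0 u 0 w" using eq by simp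
      then have "lc g p h q = (\<lambda>_. 0)" by (simp add: lc_def)
      then show False using ind gh unfolding indep_def by auto
    qed
    moreover have "X = pt (lc (g*a + h*c) u (g*b + h*d) w)" using gh eq by simp
    ultimately show "X \<in> pgline u w" unfolding pgline_def by blast
  qed
qed



lemma sum3: "(\<Sum>i<(3::nat). f i) = f 0 + f 1 + (f 2 :: 'a::comm_monoid_add)"
  by (simp add: eval_nat_numeral add.assoc)

lemma sform_bil: "sform (lc a u b w) (lc c u d w) = (a*d - b*c) * sform u (w::nat \<Rightarrow> 'a::field)"
  unfolding sform_def lc_def sum3 by algebra

lemma memP0:
  fixes v :: "nat \<Rightarrow> 'a::field"
  assumes v: "isvec v" and x0: "\<exists>i<3. v i \<noteq> 0" and y0: "\<exists>i\<ge>3. v i \<noteq> 0"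
    and nP: "pt v \<notin> Pi1 \<union> Pi2"
  shows "pt v \<in> P0 \<longleftrightarrow> (\<Sum>i<3. v i * v (i+3)) = 0"
proof -
  define x where "x = (\<lambda>i. if i < 3 then v i else 0)"
  define y where "y = (\<lambda>i. if i < 3 then 0 else v i)"
  define M where "M = pgline x y"
  obtain i0 where i0: "i0 < 3" "v i0 \<noteq> 0" using x0 by auto
  obtain j0 where j0: "j0 \<ge> 3" "v j0 \<noteq> 0" using y0 by auto
  have vnz: "v \<noteq> (\<lambda>_. 0)" using i0 by auto
  have isx: "isvec x" "isvec y" using v unfolding isvec_def x_def y_def by auto
  have xnz: "x \<noteq> (\<lambda>_. 0)" using i0 unfolding x_def by (auto dest: fun_cong[where x=i0])
  have ynz: "y \<noteq> (\<lambda>_. 0)" using j0 unfolding y_def by (auto dest: fun_cong[where x=j0])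
  have indxy: "indep x y" unfolding indep_def
  proof (intro allI impI)
    fix a b assume h: "lc a x b y = (\<lambda>_. 0)"
    have "a * v i0 = 0" using fun_cong[OF h, of i0] i0 unfolding lc_def x_def y_def by simp
    moreover have "b * v j0 = 0" using fun_cong[OF h, of j0] j0 unfolding lc_def x_def y_def by simp
    ultimately show "a = 0 \<and> b = 0" using i0 j0 by simp
  qed
  have vxy: "v = lc 1 x 1 y" unfolding lc_def x_def y_def by auto
  have yPi1: "pt y \<in> Pi1" unfolding Pi1_def using isx ynz unfolding y_def by auto
  have xPi2: "pt x \<in> Pi2" unfolding Pi2_def using isx xnz unfolding x_def by auto
  have yM: "pt y \<in> M" unfolding M_def pgline_def
    by (rule CollectI, rule exI[of _ 0], rule exI[of _ 1]) (simp add: lc_def)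
  have xM: "pt x \<in> M" unfolding M_def pgline_def
    by (rule CollectI, rule exI[of _ 1], rule exI[of _ 0]) (simp add: lc_def)
  have vM: "pt v \<in> M" unfolding M_def pgline_def
    by (rule CollectI, rule exI[of _ 1], rule exI[of _ 1]) (simp add: vxy)
  have lineM: "PG5_line M" unfolding PG5_line_def M_def using isx indxy by blast
  have uniq: "L = M" if L: "PG5_line L" "pt v \<in> L" "L \<inter> Pi1 \<noteq> {}" "L \<inter> Pi2 \<noteq> {}" for L
  proof -
    obtain u' w' where L': "L = pgline u' w'" using L(1) unfolding PG5_line_def by auto
    obtain p1 where p1: "pt p1 \<in> L" "isvec p1" "p1 \<noteq> (\<lambda>_. 0)" "\<forall>i<3. p1 i = 0"
      using L(3) unfolding Pi1_def by auto
    obtain p2 where p2: "pt p2 \<in> L" "isvec p2" "p2 \<noteq> (\<lambda>_. 0)" "\<forall>i\<ge>3. p2 i = 0"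
      using L(4) unfolding Pi2_def by auto
    obtain k1 where k1: "p1 k1 \<noteq> 0" using p1(3) by auto
    obtain k2 where k2: "p2 k2 \<noteq> 0" using p2(3) by auto
    have k1': "k1 \<ge> 3" using k1 p1(4) by (meson not_le)
    have k2': "k2 < 3" using k2 p2(4) by (meson not_le)
    have ind12: "indep p1 p2" unfolding indep_def
    proof (intro allI impI)
      fix a b assume h: "lc a p1 b p2 = (\<lambda>_. 0)"
      have "a * p1 k1 = 0" using fun_cong[OF h, of k1] k1' p2(4) unfolding lc_def by simp
      moreover have "b * p2 k2 = 0" using fun_cong[OF h, of k2] k2' p1(4) unfolding lc_def by simp
      ultimately show "a = 0 \<and> b = 0" using k1 k2 by simp
    qed
    have L12: "L = pgline p1 p2" using pgline_eq[OF ind12] p1(1) p2(1) L' by simp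
    obtain al be where ab: "v = lc al p1 be p2" using pgline_memD[of v p1 p2] L(2) L12 by auto
    have xe: "x = (\<lambda>i. be * p2 i)"
    proof
      fix i show "x i = be * p2 i" unfolding x_def ab lc_def using p1(4) p2(4)
        by (cases "i < 3") auto
    qed
    have ye: "y = (\<lambda>i. al * p1 i)"
    proof
      fix i show "y i = al * p1 i" unfolding y_def ab lc_def using p1(4) p2(4)
        by (cases "i < 3") auto
    qed
    have be0: "be \<noteq> 0" using xnz xe by auto
    have al0: "al \<noteq> 0" using ynz ye by auto
    have "pt p1 \<in> M" using yM ye pt_scale[OF al0] by simp
    moreover have "pt p2 \<in> M" using xM xe pt_scale[OF be0] by simp
    ultimately have "M = pgline p1 p2" unfolding M_def using pgline_eq[OF ind12] by simp
    then show "L = M" using L12 by simp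
  qed
  have THE: "(THE l. PG5_line l \<and> pt v \<in> l \<and> l \<inter> Pi1 \<noteq> {} \<and> l \<inter> Pi2 \<noteq> {}) = M"
  proof (rule the_equality)
    show "PG5_line M \<and> pt v \<in> M \<and> M \<inter> Pi1 \<noteq> {} \<and> M \<inter> Pi2 \<noteq> {}"
      using lineM vM yPi1 yM xPi2 xM by blast
  next
    fix L assume "PG5_line L \<and> pt v \<in> L \<and> L \<inter> Pi1 \<noteq> {} \<and> L \<inter> Pi2 \<noteq> {}"
    then show "L = M" using uniq by blast
  qed
  have inPG: "pt v \<in> PG5_points" unfolding PG5_points_def using v vnz by auto
  have P0iff: "pt v \<in> P0 \<longleftrightarrow> W_line M" unfolding P0_def using THE inPG nP by simp
  have sxy: "sform x y = (\<Sum>i<3. v i * v (i+3))" unfolding sform_def x_def y_def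
    by (rule sum.cong) auto
  have "W_line M \<longleftrightarrow> (\<Sum>i<3. v i * v (i+3)) = 0"
  proof
    assume "W_line M"
    then obtain u' w' where W: "sform u' w' = 0" "M = pgline u' w'" unfolding W_line_def by auto
    obtain a b where "x = lc a u' b w'" using pgline_memD[of x u' w'] xM W by auto
    moreover obtain c d where "y = lc c u' d w'" using pgline_memD[of y u' w'] yM W by auto
    ultimately have "sform x y = 0" using sform_bil[of a u' b w' c d] W by simp
    then show "(\<Sum>i<3. v i * v (i+3)) = 0" using sxy by simp
  next
    assume "(\<Sum>i<3. v i * v (i+3)) = 0"
    then show "W_line M" unfolding W_line_def M_def using isx indxy sxy by auto
  qed
  then show ?thesis using P0iff by simp
qed



lemma card_le2:
  assumes "finite Z" "\<forall>x\<in>Z. \<forall>y\<in>Z. \<forall>z\<in>Z. x = y \<or> x = z \<or> y = z"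
  shows "card Z \<le> 2"
proof (cases "Z = {}")
  case True then show ?thesis by simp
next
  case False
  then obtain x where x: "x \<in> Z" by auto
  show ?thesis
  proof (cases "Z \<subseteq> {x}")
    case True
    then have "card Z \<le> card {x}" by (intro card_mono) auto
    then show ?thesis by simp
  next
    case False
    then obtain y where y: "y \<in> Z" "y \<noteq> x" by auto
    have "Z \<subseteq> {x, y}" using assms(2) x y by blast
    then have "card Z \<le> card {x, y}" by (intro card_mono) auto
    also have "\<dots> \<le> 2" by (simp add: card_insert_if)
    finally show ?thesis .
  qed
qed

theorem mainTheorem12:
  fixes l :: "(nat \<Rightarrow> 'a::{field,finite}) set set"
  assumes "W_line l"
    and "l \<inter> (Pi1 \<union> Pi2) = {}"
  shows "(even (card (UNIV :: 'a set)) \<longrightarrow> card (l \<inter> P0) \<in> {1, card (UNIV :: 'a set) + 1})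
       \<and> (odd (card (UNIV :: 'a set)) \<longrightarrow> card (l \<inter> P0) \<in> {0, 1, 2})"
proof -
  obtain u w :: "nat \<Rightarrow> 'a" where uw: "isvec u" "isvec w" "indep u w" "sform u w = 0"
    and lE: "l = pgline u w"
    using assms(1) unfolding W_line_def by auto
  define V where "V = (\<lambda>s t. lc s u t w)"
  define Q where "Q = (\<lambda>s t. \<Sum>i<3. V s t i * V s t (i+3))"
  define A where "A = (\<Sum>i<3. u i * u (i+3))"
  define B where "B = (\<Sum>i<3. u i * w (i+3))"
  define C where "C = (\<Sum>i<3. w i * w (i+3))"
  define q where "q = card (UNIV :: 'a set)"
  have Vi: "V s t i = s * u i + t * w i" for s t i unfolding V_def lc_def by simp
  have Vnz: "V s t \<noteq> (\<lambda>_. 0)" if "(s, t) \<noteq> (0, 0)" for s t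
    using uw(3) that unfolding indep_def V_def by auto
  have Visvec: "isvec (V s t)" for s t using uw(1,2) unfolding isvec_def Vi by simp
  have inl: "pt (V s t) \<in> l" if "(s, t) \<noteq> (0, 0)" for s t
    unfolding lE pgline_def V_def using that by blast
  have nP: "pt (V s t) \<notin> Pi1 \<union> Pi2" if "(s, t) \<noteq> (0, 0)" for s t
    using inl[OF that] assms(2) by blast
  have x0: "\<exists>i<3. V s t i \<noteq> 0" if "(s, t) \<noteq> (0, 0)" for s t
  proof (rule ccontr)
    assume "\<not> ?thesis"
    then have "pt (V s t) \<in> Pi1" unfolding Pi1_def using Visvec Vnz[OF that] by auto
    then show False using nP[OF that] by blast
  qed
  have y0: "\<exists>i\<ge>3. V s t i \<noteq> 0" if "(s, t) \<noteq> (0, 0)" for s t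
  proof (rule ccontr)
    assume "\<not> ?thesis"
    then have "pt (V s t) \<in> Pi2" unfolding Pi2_def using Visvec Vnz[OF that] by auto
    then show False using nP[OF that] by blast
  qed
  have memb: "pt (V s t) \<in> P0 \<longleftrightarrow> Q s t = 0" if "(s, t) \<noteq> (0, 0)" for s t
    unfolding Q_def by (rule memP0[OF Visvec x0[OF that] y0[OF that] nP[OF that]])
  have Zeq: "l \<inter> P0 = {pt (V s t) | s t. (s, t) \<noteq> (0, 0) \<and> Q s t = 0}"
  proof (intro set_eqI iffI)
    fix X assume "X \<in> l \<inter> P0"
    then obtain s t where st: "(s, t) \<noteq> (0, 0)" "X = pt (V s t)" "X \<in> P0"
      unfolding lE pgline_def V_def by auto
    then show "X \<in> {pt (V s t) | s t. (s, t) \<noteq> (0, 0) \<and> Q s t = 0}" using memb by blast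
  next
    fix X assume "X \<in> {pt (V s t) | s t. (s, t) \<noteq> (0, 0) \<and> Q s t = 0}"
    then obtain s t where st: "(s, t) \<noteq> (0, 0)" "X = pt (V s t)" "Q s t = 0" by auto
    then show "X \<in> l \<inter> P0" using memb inl by blast
  qed
  have Qf: "Q s t = A*s^2 + (2*B)*s*t + C*t^2" for s t
  proof -
    have "(\<Sum>i<3. u i * w (i+3) - u (i+3) * w i) = 0" using uw(4) unfolding sform_def .
    then show ?thesis unfolding Q_def A_def B_def C_def Vi sum3 by algebra
  qed
  have propeq: "pt (V s t) = pt (V s' t')"
    if "(s, t) \<noteq> (0, 0)" "(s', t') \<noteq> (0, 0)" "s * t' = s' * t" for s t s' t'
  proof (cases "s' = 0")
    case False
    define k where "k = s / s'"
    have tk: "t = k * t'" unfolding k_def using that(3) False by (simp add: field_simps)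
    have sk: "s = k * s'" unfolding k_def using False by simp
    have k0: "k \<noteq> 0" using that(1) tk sk by auto
    have "V s t = (\<lambda>i. k * V s' t' i)" unfolding Vi sk tk by (auto simp: algebra_simps)
    then show ?thesis using pt_scale[OF k0] by simp
  next
    case True
    then have t'0: "t' \<noteq> 0" using that(2) by auto
    define k where "k = t / t'"
    have sk: "s = k * s'" unfolding k_def using that(3) t'0 True by (simp add: field_simps)
    have tk: "t = k * t'" unfolding k_def using t'0 by simp
    have k0: "k \<noteq> 0" using that(1) tk sk by auto
    have "V s t = (\<lambda>i. k * V s' t' i)" unfolding Vi sk tk by (auto simp: algebra_simps)
    then show ?thesis using pt_scale[OF k0] by simp
  qed
  have propconv: "s * t' = s' * t" if eq: "pt (V s t) = pt (V s' t')" for s t s' t'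
  proof -
    obtain c where c: "c \<noteq> 0" "V s t = (\<lambda>i. c * V s' t' i)" using pt_eqD[OF eq] by auto
    have "lc (s - c*s') u (t - c*t') w = (\<lambda>_. 0)"
    proof
      fix i show "lc (s - c*s') u (t - c*t') w i = 0"
        using fun_cong[OF c(2), of i] unfolding Vi lc_def by (simp add: algebra_simps)
    qed
    then have "s - c*s' = 0 \<and> t - c*t' = 0" using uw(3) unfolding indep_def by blast
    then show ?thesis by simp
  qed
  have lE2: "l = insert (pt (V 0 1)) ((\<lambda>t. pt (V 1 t)) ` UNIV)"
  proof (intro set_eqI iffI)
    fix X assume "X \<in> l"
    then obtain s t where st: "(s, t) \<noteq> (0, 0)" "X = pt (V s t)"
      unfolding lE pgline_def V_def by auto
    show "X \<in> insert (pt (V 0 1)) ((\<lambda>t. pt (V 1 t)) ` UNIV)"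
    proof (cases "s = 0")
      case True
      then have "X = pt (V 0 1)" using st propeq[of s t 0 1] by simp
      then show ?thesis by simp
    next
      case False
      then have "X = pt (V 1 (t/s))" using st propeq[of s t 1 "t/s"] by simp
      then show ?thesis by simp
    qed
  next
    fix X assume "X \<in> insert (pt (V 0 1)) ((\<lambda>t. pt (V 1 t)) ` UNIV)"
    then show "X \<in> l" using inl by auto
  qed
  have finl: "finite l" unfolding lE2 by simp
  have cardl: "card l = q + 1"
  proof -
    have inj: "inj (\<lambda>t. pt (V 1 t))"
    proof (rule injI)
      fix x y assume "pt (V 1 x) = pt (V 1 y)"
      from propconv[OF this] show "x = y" by simp
    qed
    have nin: "pt (V 0 1) \<notin> (\<lambda>t. pt (V 1 t)) ` UNIV"
    proof
      assume "pt (V 0 1) \<in> (\<lambda>t. pt (V 1 t)) ` UNIV"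
      then obtain t where "pt (V 0 1) = pt (V 1 t)" by auto
      from propconv[OF this] show False by simp
    qed
    show ?thesis unfolding lE2 q_def using nin card_image[OF inj] by simp
  qed
  have finZ: "finite (l \<inter> P0)" using finl by simp
  show ?thesis
  proof (intro conjI impI)
    assume ev: "even (card (UNIV :: 'a set))"
    have two: "(1::'a) + 1 = 0" by (rule even_char2[OF ev])
    have Qe: "Q s t = A*s^2 + C*t^2" for s t
    proof -
      have "(2::'a) = 0" using two by simp
      then show ?thesis using Qf by simp
    qed
    show "card (l \<inter> P0) \<in> {1, card (UNIV :: 'a set) + 1}"
    proof (cases "A = 0 \<and> C = 0")
      case True
      have "l \<subseteq> P0"
      proof
        fix X assume "X \<in> l"
        then obtain s t where st: "(s, t) \<noteq> (0, 0)" "X = pt (V s t)"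
          unfolding lE pgline_def V_def by auto
        then show "X \<in> P0" using memb[OF st(1)] Qe True by simp
      qed
      then have "l \<inter> P0 = l" by blast
      then show ?thesis using cardl q_def by simp
    next
      case False
      obtain s0 t0 where z0: "(s0, t0) \<noteq> (0, 0)" "Q s0 t0 = 0"
      proof (cases "A = 0")
        case True then show ?thesis using that[of 1 0] Qe by simp
      next
        case False
        have "inj (\<lambda>x::'a. x^2)"
        proof (rule injI)
          fix x y :: 'a assume "x^2 = y^2"
          have t2: "(2::'a) = 0" using two by simp
          have yy: "z + z = 0" for z :: 'a
          proof -
            have "z + z = (1 + 1) * z" by (simp add: distrib_right)
            then show ?thesis using two by simp
          qed
          have "(x + y)^2 = x^2 + y^2 + 2*x*y" by (simp add: power2_sum)
          also have "\<dots> = y^2 + y^2" using \<open>x^2 = y^2\<close> t2 by simp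
          also have "\<dots> = 0" by (rule yy)
          finally have "x + y = 0" by simp
          then have "x = - y" by (simp add: eq_neg_iff_add_eq_0)
          moreover have "y = - y" using yy[of y] by (simp add: eq_neg_iff_add_eq_0)
          ultimately show "x = y" by simp
        qed
        then have "surj (\<lambda>x::'a. x^2)" by (rule finite_UNIV_inj_surj[rotated]) simp
        then obtain r where r: "r^2 = - C / A" by (metis surjD)
        have "Q r 1 = 0" using Qe r False by (simp add: field_simps)
        then show ?thesis using that[of r 1] by simp
      qed
      have "l \<inter> P0 = {pt (V s0 t0)}"
      proof (intro set_eqI iffI)
        fix X assume "X \<in> l \<inter> P0"
        then obtain s t where st: "(s, t) \<noteq> (0, 0)" "X = pt (V s t)" "Q s t = 0"
          unfolding Zeq by auto
        have e1: "A*s^2 + C*t^2 = 0" "A*s0^2 + C*t0^2 = 0" using st(3) z0(2) Qe by auto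
        have t2: "(2::'a) = 0" using two by simp
        have a1: "A*s^2 = -(C*t^2)" "A*s0^2 = -(C*t0^2)" using e1 by (simp_all add: eq_neg_iff_add_eq_0)
        have c1: "C*t^2 = -(A*s^2)" "C*t0^2 = -(A*s0^2)" using e1 by (simp_all add: eq_neg_iff_add_eq_0 add.commute)
        have "A * (s*t0 - s0*t)^2 = (A*s^2)*t0^2 + (A*s0^2)*t^2 - 2*(A*s*t0*s0*t)" by algebra
        also have "\<dots> = (-(C*t^2))*t0^2 + (-(C*t0^2))*t^2" using a1 t2 by simp
        also have "\<dots> = -(2*(C*t^2*t0^2))" by algebra
        finally have "A * (s*t0 - s0*t)^2 = 0" using t2 by simp
        have "C * (s*t0 - s0*t)^2 = (C*t0^2)*s^2 + (C*t^2)*s0^2 - 2*(C*s*t0*s0*t)" by algebra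
        also have "\<dots> = (-(A*s0^2))*s^2 + (-(A*s^2))*s0^2" using c1 t2 by simp
        also have "\<dots> = -(2*(A*s^2*s0^2))" by algebra
        finally have "C * (s*t0 - s0*t)^2 = 0" using t2 by simp
        with \<open>A * (s*t0 - s0*t)^2 = 0\<close> have "s*t0 = s0*t" using False by auto
        then have "X = pt (V s0 t0)" using propeq[OF st(1) z0(1)] st(2) by simp
        then show "X \<in> {pt (V s0 t0)}" by simp
      next
        fix X assume "X \<in> {pt (V s0 t0)}"
        then show "X \<in> l \<inter> P0" unfolding Zeq using z0 by auto
      qed
      then show ?thesis by simp
    qed
  next
    assume od: "odd (card (UNIV :: 'a set))"
    have two: "(1::'a) + 1 \<noteq> 0" using char2_even od by blast
    have notall: "\<not> (A = 0 \<and> 2*B = 0 \<and> C = 0)"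
    proof
      assume h: "A = 0 \<and> 2*B = 0 \<and> C = 0"
      have B0: "B = 0" using h two by (metis mult_eq_0_iff one_add_one)
      have B': "(\<Sum>i<3. w i * u (i+3)) = 0"
      proof -
        have "(\<Sum>i<3. u i * w (i+3) - u (i+3) * w i) = 0" using uw(4) unfolding sform_def .
        then show ?thesis using B0 unfolding B_def sum3 by (simp add: algebra_simps)
      qed
      show False
      proof (rule key_odd[of "u 0" "w 0" "u 1" "w 1" "u 2" "w 2" "u 3" "w 3" "u 4" "w 4" "u 5" "w 5"])
        fix s t assume "s * u 0 + t * w 0 = 0" "s * u 1 + t * w 1 = 0" "s * u 2 + t * w 2 = 0"
        then have "\<forall>i<3. V s t i = 0"
        proof (intro allI impI)
          fix i :: nat assume "i < 3"
          then have "i = 0 \<or> i = 1 \<or> i = 2" by auto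
          then show "V s t i = 0" using \<open>s * u 0 + t * w 0 = 0\<close>
             \<open>s * u 1 + t * w 1 = 0\<close> \<open>s * u 2 + t * w 2 = 0\<close> unfolding Vi by auto
        qed
        then show "s = 0 \<and> t = 0" using x0[of s t] by auto
      next
        fix s t assume "s * u 3 + t * w 3 = 0" "s * u 4 + t * w 4 = 0" "s * u 5 + t * w 5 = 0"
        then have "\<forall>i\<ge>3. V s t i = 0"
        proof (intro allI impI)
          fix i :: nat assume "3 \<le> i"
          then have "i = 3 \<or> i = 4 \<or> i = 5 \<or> i \<ge> 6" by auto
          then show "V s t i = 0" using Visvec[of s t] \<open>s * u 3 + t * w 3 = 0\<close>
             \<open>s * u 4 + t * w 4 = 0\<close> \<open>s * u 5 + t * w 5 = 0\<close> unfolding isvec_def Vi by auto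
        qed
        then show "s = 0 \<and> t = 0" using y0[of s t] by auto
      next
        show "u 0 * u 3 + u 1 * u 4 + u 2 * u 5 = 0" using h unfolding A_def sum3 by simp
        show "u 0 * w 3 + u 1 * w 4 + u 2 * w 5 = 0" using B0 unfolding B_def sum3 by simp
        show "w 0 * u 3 + w 1 * u 4 + w 2 * u 5 = 0" using B' unfolding sum3 by simp
        show "w 0 * w 3 + w 1 * w 4 + w 2 * w 5 = 0" using h unfolding C_def sum3 by simp
      qed
    qed
    have "card (l \<inter> P0) \<le> 2"
    proof (rule card_le2[OF finZ], intro ballI)
      fix X Y Z assume XYZ: "X \<in> l \<inter> P0" "Y \<in> l \<inter> P0" "Z \<in> l \<inter> P0"
      obtain s1 t1 where 1: "(s1, t1) \<noteq> (0, 0)" "X = pt (V s1 t1)" "Q s1 t1 = 0"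
        using XYZ(1) unfolding Zeq by auto
      obtain s2 t2 where 2: "(s2, t2) \<noteq> (0, 0)" "Y = pt (V s2 t2)" "Q s2 t2 = 0"
        using XYZ(2) unfolding Zeq by auto
      obtain s3 t3 where 3: "(s3, t3) \<noteq> (0, 0)" "Z = pt (V s3 t3)" "Q s3 t3 = 0"
        using XYZ(3) unfolding Zeq by auto
      show "X = Y \<or> X = Z \<or> Y = Z"
      proof (rule ccontr)
        assume "\<not> ?thesis"
        then have ne: "X \<noteq> Y" "X \<noteq> Z" "Y \<noteq> Z" by auto
        have n12: "s1*t2 \<noteq> s2*t1"
        proof
          assume "s1*t2 = s2*t1"
          from propeq[OF 1(1) 2(1) this] show False using ne 1(2) 2(2) by simp
        qed
        have n13: "s1*t3 \<noteq> s3*t1"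
        proof
          assume "s1*t3 = s3*t1"
          from propeq[OF 1(1) 3(1) this] show False using ne 1(2) 3(2) by simp
        qed
        have n23: "s2*t3 \<noteq> s3*t2"
        proof
          assume "s2*t3 = s3*t2"
          from propeq[OF 2(1) 3(1) this] show False using ne 2(2) 3(2) by simp
        qed
        have q1: "A*s1^2 + (2*B)*s1*t1 + C*t1^2 = 0" using 1(3) Qf[of s1 t1] by simp
        have q2: "A*s2^2 + (2*B)*s2*t2 + C*t2^2 = 0" using 2(3) Qf[of s2 t2] by simp
        have q3: "A*s3^2 + (2*B)*s3*t3 + C*t3^2 = 0" using 3(3) Qf[of s3 t3] by simp
        have "A = 0 \<and> 2*B = 0 \<and> C = 0" by (rule three_zeros[OF q1 q2 q3 n12 n13 n23])
        then show False using notall by blast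
      qed
    qed
    then show "card (l \<inter> P0) \<in> {0, 1, 2}" by auto
  qed
qed

end
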